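(* Let $A, B \in \mathbb{R}^{n\times n}_+$ be entrywise nonnegative Schur-stable matrices, and assume at least one of $A$, $B$ is irreducible. Suppose there exists a vector $v\in\mathbb{R}^n$ with all entries strictly positive such that (1) $v^TA\le v^T$ and $v^TB\le v^T$ (entrywise), and (2) every entry of $v^T(A+B)$ is strictly less than the corresponding entry of $2v^T$. Let $\mathcal{D}_{A,B}$ be the set of diagonal matrices $D\in\mathbb{R}^{n\times n}$ with nonnegative diagonal entries such that $A-D$ and $B-D$ are both entrywise nonnegative. Then for every $D\in\mathcal{D}_{A,B}$ the matrix $$M=\begin{pmatrix} A-D & D\\ D & B-D\end{pmatrix}$$ is Schur-stable.
   Context: A real square matrix is Schur-stable if its spectral radius is strictly less than $1$. A matrix $A\in\mathbb{R}^{n\times n}$ is reducible if there exist nonempty disjoint sets $I,J$ with $I\cup J=\{1,\dots,n\}$ such that $a_{ij}=0$ for all $i\in I$, $j\in J$; otherwise it is irreducible. $\mathbb{R}^{n\times n}_+$ denotes the set of entrywise nonnegative $n\times n$ real matrices. A vector $v$ as in the hypothesis is said to define a joint linear copositive Lyapunov function $V(x)=v^Tx$ for $A,B$. *)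

theory Defs
  imports "Jordan_Normal_Form.Spectral_Radius"
begin

definition schur_stable :: "real mat \<Rightarrow> bool" where
  "schur_stable A \<longleftrightarrow> spectral_radius (map_mat complex_of_real A) < 1"

definition nonneg_mat :: "nat \<Rightarrow> real mat \<Rightarrow> bool" where
  "nonneg_mat n A \<longleftrightarrow> (\<forall>i<n. \<forall>j<n. A $$ (i, j) \<ge> 0)"

definition reducible_mat :: "nat \<Rightarrow> real mat \<Rightarrow> bool" where
  "reducible_mat n A \<longleftrightarrow> (\<exists>I J. I \<noteq> {} \<and> J \<noteq> {} \<and> I \<inter> J = {} \<and> I \<union> J = {0..<n}
      \<and> (\<forall>i\<in>I. \<forall>j\<in>J. A $$ (i, j) = 0))"

definition irreducible_mat :: "nat \<Rightarrow> real mat \<Rightarrow> bool" where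
  "irreducible_mat n A \<longleftrightarrow> \<not> reducible_mat n A"

definition D_set :: "nat \<Rightarrow> real mat \<Rightarrow> real mat \<Rightarrow> real mat set" where
  "D_set n A B = {D. D \<in> carrier_mat n n \<and> diagonal_mat D \<and> (\<forall>i<n. D $$ (i, i) \<ge> 0)
      \<and> nonneg_mat n (A - D) \<and> nonneg_mat n (B - D)}"

end

theory Submission imports Defs begin

lemma sum_split_add: "(\<Sum>j<n+m. (f::nat\<Rightarrow>real) j) = (\<Sum>j<n. f j) + (\<Sum>j<m. f (n+j))"
  by (induct m) auto

lemma core:
  fixes a b :: "nat \<Rightarrow> nat \<Rightarrow> real" and d v p q :: "nat \<Rightarrow> real"
  assumes a0: "\<And>i j. i<n \<Longrightarrow> j<n \<Longrightarrow> a i j \<ge> 0"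
    and b0: "\<And>i j. i<n \<Longrightarrow> j<n \<Longrightarrow> b i j \<ge> 0"
    and d0: "\<And>i. i<n \<Longrightarrow> d i \<ge> 0"
    and v0: "\<And>i. i<n \<Longrightarrow> v i > 0"
    and p0: "\<And>i. i<n \<Longrightarrow> p i \<ge> 0"
    and q0: "\<And>i. i<n \<Longrightarrow> q i \<ge> 0"
    and vA: "\<And>j. j<n \<Longrightarrow> (\<Sum>i<n. v i * a i j) \<le> v j"
    and vB: "\<And>j. j<n \<Longrightarrow> (\<Sum>i<n. v i * b i j) \<le> v j"
    and vAB: "\<And>j. j<n \<Longrightarrow> (\<Sum>i<n. v i * a i j) + (\<Sum>i<n. v i * b i j) < 2 * v j"
    and hp: "\<And>i. i<n \<Longrightarrow> p i + d i * p i \<le> (\<Sum>j<n. a i j * p j) + d i * q i"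
    and hq: "\<And>i. i<n \<Longrightarrow> q i + d i * q i \<le> (\<Sum>j<n. b i j * q j) + d i * p i"
  shows "\<And>i. i<n \<Longrightarrow> (\<Sum>j<n. a i j * p j) = p i \<and> (\<Sum>j<n. b i j * q j) = q i"
proof -
  define s where "s j = v j - (\<Sum>i<n. v i * a i j)" for j
  define t where "t j = v j - (\<Sum>i<n. v i * b i j)" for j
  define ra where "ra i = (\<Sum>j<n. a i j * p j)" for i
  define rb where "rb i = (\<Sum>j<n. b i j * q j)" for i
  have s0: "j<n \<Longrightarrow> s j \<ge> 0" for j using vA[of j] by (simp add: s_def)
  have t0: "j<n \<Longrightarrow> t j \<ge> 0" for j using vB[of j] by (simp add: t_def)
  have st: "j<n \<Longrightarrow> s j + t j > 0" for j using vAB[of j] by (simp add: s_def t_def)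
  have ra0: "i<n \<Longrightarrow> ra i \<ge> 0" for i unfolding ra_def using a0 p0 by (intro sum_nonneg) auto
  have rb0: "i<n \<Longrightarrow> rb i \<ge> 0" for i unfolding rb_def using b0 q0 by (intro sum_nonneg) auto
  have eqa: "(\<Sum>i<n. v i * ra i) = (\<Sum>j<n. (v j - s j) * p j)"
  proof -
    have "(\<Sum>i<n. v i * ra i) = (\<Sum>i<n. \<Sum>j<n. v i * a i j * p j)"
      unfolding ra_def by (simp add: sum_distrib_left mult.assoc)
    also have "\<dots> = (\<Sum>j<n. \<Sum>i<n. v i * a i j * p j)" by (rule sum.swap)
    also have "\<dots> = (\<Sum>j<n. (v j - s j) * p j)" unfolding s_def by (simp add: sum_distrib_right)
    finally show ?thesis .
  qed
  have eqb: "(\<Sum>i<n. v i * rb i) = (\<Sum>j<n. (v j - t j) * q j)"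
  proof -
    have "(\<Sum>i<n. v i * rb i) = (\<Sum>i<n. \<Sum>j<n. v i * b i j * q j)"
      unfolding rb_def by (simp add: sum_distrib_left mult.assoc)
    also have "\<dots> = (\<Sum>j<n. \<Sum>i<n. v i * b i j * q j)" by (rule sum.swap)
    also have "\<dots> = (\<Sum>j<n. (v j - t j) * q j)" unfolding t_def by (simp add: sum_distrib_right)
    finally show ?thesis .
  qed
  have key: "(\<Sum>i<n. v i * (ra i + rb i - p i - q i)) = - (\<Sum>j<n. s j * p j + t j * q j)"
    using eqa eqb by (simp add: algebra_simps sum.distrib sum_subtractf)
  have e0: "i<n \<Longrightarrow> v i * (ra i + rb i - p i - q i) \<ge> 0" for i
    using hp[of i] hq[of i] v0[of i] unfolding ra_def rb_def by (intro mult_nonneg_nonneg) auto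
  have f0: "j<n \<Longrightarrow> s j * p j + t j * q j \<ge> 0" for j
    using s0 t0 p0 q0 by (simp add: add_nonneg_nonneg)
  have S1: "(\<Sum>i<n. v i * (ra i + rb i - p i - q i)) \<ge> 0" using e0 by (intro sum_nonneg) auto
  have S2: "(\<Sum>j<n. s j * p j + t j * q j) \<ge> 0" using f0 by (intro sum_nonneg) auto
  have Z1: "(\<Sum>i<n. v i * (ra i + rb i - p i - q i)) = 0" using S1 S2 key by linarith
  have Z2: "(\<Sum>j<n. s j * p j + t j * q j) = 0" using S1 S2 key by linarith
  have z1: "i<n \<Longrightarrow> v i * (ra i + rb i - p i - q i) = 0" for i
    using Z1 e0 sum_nonneg_eq_0_iff[of "{..<n}" "\<lambda>i. v i * (ra i + rb i - p i - q i)"] by auto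
  have z2: "j<n \<Longrightarrow> s j * p j + t j * q j = 0" for j
    using Z2 f0 sum_nonneg_eq_0_iff[of "{..<n}" "\<lambda>j. s j * p j + t j * q j"] by auto
  have sum_eq: "i<n \<Longrightarrow> ra i + rb i = p i + q i" for i using z1[of i] v0[of i] by auto
  have disj: "j<n \<Longrightarrow> p j = 0 \<or> q j = 0" for j
  proof -
    assume j: "j<n"
    have sp: "s j * p j = 0" and tq: "t j * q j = 0"
      using z2[OF j] s0[OF j] t0[OF j] p0[OF j] q0[OF j]
      by (smt (verit) mult_nonneg_nonneg)+
    show ?thesis using sp tq st[OF j] s0[OF j] t0[OF j] by auto
  qed
  have rap: "i<n \<Longrightarrow> ra i \<ge> p i" for i
  proof -
    assume i: "i<n"
    show ?thesis
    proof (cases "q i = 0")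
      case True
      have "d i * p i \<ge> 0" using d0[OF i] p0[OF i] by simp
      then show ?thesis using hp[OF i] True unfolding ra_def by simp
    next
      case False
      then show ?thesis using disj[OF i] ra0[OF i] by auto
    qed
  qed
  have rbq: "i<n \<Longrightarrow> rb i \<ge> q i" for i
  proof -
    assume i: "i<n"
    show ?thesis
    proof (cases "p i = 0")
      case True
      have "d i * q i \<ge> 0" using d0[OF i] q0[OF i] by simp
      then show ?thesis using hq[OF i] True unfolding rb_def by simp
    next
      case False
      then show ?thesis using disj[OF i] rb0[OF i] by auto
    qed
  qed
  fix i assume i: "i<n"
  show "(\<Sum>j<n. a i j * p j) = p i \<and> (\<Sum>j<n. b i j * q j) = q i"
    using sum_eq[OF i] rap[OF i] rbq[OF i] unfolding ra_def rb_def by linarith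
qed

lemma fixed_not_stable:
  fixes A :: "real mat" and p :: "real vec"
  assumes A: "A \<in> carrier_mat n n" and p: "p \<in> carrier_vec n" and pnz: "\<exists>i<n. p $ i \<noteq> 0"
    and hfix: "\<And>i. i<n \<Longrightarrow> (\<Sum>j<n. A $$ (i,j) * p $ j) = p $ i"
  shows "\<not> schur_stable A"
proof
  assume st: "schur_stable A"
  let ?Ac = "map_mat complex_of_real A"
  let ?pc = "map_vec complex_of_real p"
  have Ac: "?Ac \<in> carrier_mat n n" using A by simp
  from pnz have n: "n > 0" by auto
  have "?Ac *\<^sub>v ?pc = 1 \<cdot>\<^sub>v ?pc"
  proof (rule eq_vecI)
    fix i assume "i < dim_vec (1 \<cdot>\<^sub>v ?pc)"
    hence i: "i < n" using p by simp
    have "(?Ac *\<^sub>v ?pc) $ i = (\<Sum>j<n. complex_of_real (A $$ (i,j) * p $ j))"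
      using A p i by (simp add: mult_mat_vec_def scalar_prod_def lessThan_atLeast0)
    also have "\<dots> = complex_of_real (\<Sum>j<n. A $$ (i,j) * p $ j)" by simp
    also have "\<dots> = (1 \<cdot>\<^sub>v ?pc) $ i" using hfix[OF i] p i by simp
    finally show "(?Ac *\<^sub>v ?pc) $ i = (1 \<cdot>\<^sub>v ?pc) $ i" .
  qed (insert A p, auto)
  moreover have "?pc \<noteq> 0\<^sub>v n"
  proof
    assume "?pc = 0\<^sub>v n"
    then show False using pnz p by (metis (no_types) carrier_vecD index_map_vec(1) index_zero_vec(1) of_real_eq_0_iff)
  qed
  ultimately have "eigenvector ?Ac ?pc 1" unfolding eigenvector_def using A p by auto
  hence "eigenvalue ?Ac 1" unfolding eigenvalue_def by auto
  hence "norm (1::complex) \<in> norm ` spectrum ?Ac" unfolding spectrum_def by (metis image_eqI mem_Collect_eq)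
  from spectral_radius_mem_max(2)[OF Ac n this] st show False unfolding schur_stable_def by simp
qed


lemma diag_sum:
  fixes D :: "real mat"
  assumes D: "D \<in> carrier_mat n n" and dg: "diagonal_mat D" and i: "i < n"
  shows "(\<Sum>j<n. D $$ (i,j) * f j) = D $$ (i,i) * f i"
proof -
  have "(\<Sum>j<n. D $$ (i,j) * f j) = (\<Sum>j<n. if j = i then D $$ (i,i) * f i else 0)"
    using D dg i unfolding diagonal_mat_def by (intro sum.cong) auto
  also have "\<dots> = D $$ (i,i) * f i" using i by simp
  finally show ?thesis .
qed

theorem theorem3:
  fixes n :: nat and A B D :: "real mat" and v :: "real vec"
  assumes n: "n > 0"
    and A: "A \<in> carrier_mat n n" and B: "B \<in> carrier_mat n n"
    and nonnegA: "nonneg_mat n A" and nonnegB: "nonneg_mat n B"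
    and stabA: "schur_stable A" and stabB: "schur_stable B"
    and irr: "irreducible_mat n A \<or> irreducible_mat n B"
    and v: "v \<in> carrier_vec n" and vpos: "\<forall>i<n. v $ i > 0"
    and vA: "\<forall>j<n. (\<Sum>i<n. v $ i * A $$ (i, j)) \<le> v $ j"
    and vB: "\<forall>j<n. (\<Sum>i<n. v $ i * B $$ (i, j)) \<le> v $ j"
    and vAB: "\<forall>j<n. (\<Sum>i<n. v $ i * (A + B) $$ (i, j)) < 2 * v $ j"
    and D: "D \<in> D_set n A B"
  shows "schur_stable (four_block_mat (A - D) D D (B - D))"
proof (rule ccontr)
  define M where "M = four_block_mat (A - D) D D (B - D)"
  assume "\<not> schur_stable (four_block_mat (A - D) D D (B - D))"
  hence nst: "\<not> schur_stable M" unfolding M_def .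
  from D have Dc: "D \<in> carrier_mat n n" and dg: "diagonal_mat D"
    and d0: "\<And>i. i<n \<Longrightarrow> D $$ (i,i) \<ge> 0"
    and nAD: "nonneg_mat n (A - D)" and nBD: "nonneg_mat n (B - D)"
    unfolding D_set_def by auto
  have Dij0: "i<n \<Longrightarrow> j<n \<Longrightarrow> D $$ (i,j) \<ge> 0" for i j
    using dg Dc d0 unfolding diagonal_mat_def by (cases "i = j") auto
  have Mc: "M \<in> carrier_mat (n+n) (n+n)" unfolding M_def using A B Dc by auto
  have e1: "i<n \<Longrightarrow> j<n \<Longrightarrow> M $$ (i,j) = A $$ (i,j) - D $$ (i,j)" for i j
    unfolding M_def using A B Dc by simp
  have e2: "i<n \<Longrightarrow> j<n \<Longrightarrow> M $$ (i,n+j) = D $$ (i,j)" for i j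
    unfolding M_def using A B Dc by simp
  have e3: "i<n \<Longrightarrow> j<n \<Longrightarrow> M $$ (n+i,j) = D $$ (i,j)" for i j
    unfolding M_def using A B Dc by simp
  have e4: "i<n \<Longrightarrow> j<n \<Longrightarrow> M $$ (n+i,n+j) = B $$ (i,j) - D $$ (i,j)" for i j
    unfolding M_def using A B Dc by simp
  have Mnn: "i<n+n \<Longrightarrow> j<n+n \<Longrightarrow> M $$ (i,j) \<ge> 0" for i j
  proof -
    assume i: "i<n+n" and j: "j<n+n"
    have ADn: "i<n \<Longrightarrow> j<n \<Longrightarrow> A $$ (i,j) - D $$ (i,j) \<ge> 0" for i j
      using nAD A Dc unfolding nonneg_mat_def by auto
    have BDn: "i<n \<Longrightarrow> j<n \<Longrightarrow> B $$ (i,j) - D $$ (i,j) \<ge> 0" for i j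
      using nBD B Dc unfolding nonneg_mat_def by auto
    show ?thesis
    proof (cases "i<n")
      case True note ii = this
      show ?thesis
      proof (cases "j<n")
        case True then show ?thesis using e1 ii ADn by simp
      next
        case False
        then obtain j' where "j = n + j'" "j' < n" using j by (metis add_less_imp_less_left le_Suc_ex not_less)
        then show ?thesis using e2 ii Dij0 by simp
      qed
    next
      case False
      then obtain i' where ii: "i = n + i'" "i' < n" using i by (metis add_less_imp_less_left le_Suc_ex not_less)
      show ?thesis
      proof (cases "j<n")
        case True then show ?thesis using e3 ii Dij0 by simp
      next
        case False
        then obtain j' where "j = n + j'" "j' < n" using j by (metis add_less_imp_less_left le_Suc_ex not_less)
        then show ?thesis using e4 ii BDn by simp
      qed
    qed
  qed
  let ?Mc = "map_mat complex_of_real M"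
  have Mcc: "?Mc \<in> carrier_mat (n+n) (n+n)" using Mc by simp
  have nn: "n + n > 0" using n by simp
  from spectral_radius_mem_max(1)[OF Mcc nn] obtain lam where
    lam: "lam \<in> spectrum ?Mc" and sr: "spectral_radius ?Mc = norm lam" by auto
  from nst sr have lam1: "norm lam \<ge> 1" unfolding schur_stable_def by simp
  from lam obtain x where ev: "eigenvector ?Mc x lam"
    unfolding spectrum_def eigenvalue_def by auto
  hence xc: "x \<in> carrier_vec (n+n)" and xnz: "x \<noteq> 0\<^sub>v (n+n)"
    and Mx: "?Mc *\<^sub>v x = lam \<cdot>\<^sub>v x"
    unfolding eigenvector_def using Mc by auto
  define y where "y j = cmod (x $ j)" for j
  have y0: "y j \<ge> 0" for j unfolding y_def by simp
  have ineq: "i<n+n \<Longrightarrow> y i \<le> (\<Sum>j<n+n. M $$ (i,j) * y j)" for i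
  proof -
    assume i: "i<n+n"
    have "y i \<le> norm lam * y i" using lam1 y0[of i] by (simp add: mult_le_cancel_right1)
    also have "\<dots> = cmod ((lam \<cdot>\<^sub>v x) $ i)" using xc i by (simp add: y_def norm_mult)
    also have "\<dots> = cmod ((?Mc *\<^sub>v x) $ i)" using Mx by simp
    also have "(?Mc *\<^sub>v x) $ i = (\<Sum>j<n+n. complex_of_real (M $$ (i,j)) * x $ j)"
      using Mc xc i by (simp add: mult_mat_vec_def scalar_prod_def lessThan_atLeast0)
    also have "cmod \<dots> \<le> (\<Sum>j<n+n. cmod (complex_of_real (M $$ (i,j)) * x $ j))"
      by (rule norm_sum)
    also have "\<dots> = (\<Sum>j<n+n. M $$ (i,j) * y j)"
      using Mnn i by (intro sum.cong) (auto simp: norm_mult y_def)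
    finally show ?thesis .
  qed
  define p where "p i = y i" for i
  define q where "q i = y (n+i)" for i
  have hp: "p i + D $$ (i,i) * p i \<le> (\<Sum>j<n. A $$ (i,j) * p j) + D $$ (i,i) * q i" if i: "i<n" for i
  proof -
    have "p i \<le> (\<Sum>j<n. M $$ (i,j) * y j) + (\<Sum>j<n. M $$ (i,n+j) * y (n+j))"
      using ineq[of i] i unfolding p_def sum_split_add by simp
    also have "(\<Sum>j<n. M $$ (i,j) * y j) = (\<Sum>j<n. A $$ (i,j) * p j) - (\<Sum>j<n. D $$ (i,j) * p j)"
      using e1 i by (simp add: p_def left_diff_distrib sum_subtractf)
    also have "(\<Sum>j<n. M $$ (i,n+j) * y (n+j)) = (\<Sum>j<n. D $$ (i,j) * q j)"
      using e2 i by (simp add: q_def)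
    finally show ?thesis using diag_sum[OF Dc dg i, of p] diag_sum[OF Dc dg i, of q] by simp
  qed
  have hq: "q i + D $$ (i,i) * q i \<le> (\<Sum>j<n. B $$ (i,j) * q j) + D $$ (i,i) * p i" if i: "i<n" for i
  proof -
    have "q i \<le> (\<Sum>j<n. M $$ (n+i,j) * y j) + (\<Sum>j<n. M $$ (n+i,n+j) * y (n+j))"
      using ineq[of "n+i"] i unfolding q_def sum_split_add by simp
    also have "(\<Sum>j<n. M $$ (n+i,n+j) * y (n+j)) = (\<Sum>j<n. B $$ (i,j) * q j) - (\<Sum>j<n. D $$ (i,j) * q j)"
      using e4 i by (simp add: q_def left_diff_distrib sum_subtractf)
    also have "(\<Sum>j<n. M $$ (n+i,j) * y j) = (\<Sum>j<n. D $$ (i,j) * p j)"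
      using e3 i by (simp add: p_def)
    finally show ?thesis using diag_sum[OF Dc dg i, of p] diag_sum[OF Dc dg i, of q] by simp
  qed
  have vAB': "j<n \<Longrightarrow> (\<Sum>i<n. v $ i * A $$ (i,j)) + (\<Sum>i<n. v $ i * B $$ (i,j)) < 2 * v $ j" for j
  proof -
    assume j: "j<n"
    have "(\<Sum>i<n. v $ i * (A + B) $$ (i, j)) = (\<Sum>i<n. v $ i * A $$ (i,j)) + (\<Sum>i<n. v $ i * B $$ (i,j))"
    proof -
      have "(\<Sum>i<n. v $ i * (A + B) $$ (i, j)) = (\<Sum>i<n. v $ i * A $$ (i,j) + v $ i * B $$ (i,j))"
        by (rule sum.cong) (use A B j in \<open>auto simp: distrib_left\<close>)
      then show ?thesis by (simp add: sum.distrib)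
    qed
    moreover have "(\<Sum>i<n. v $ i * (A + B) $$ (i, j)) < 2 * v $ j" using vAB j by blast
    ultimately show ?thesis by linarith
  qed
  have fx: "\<And>i. i<n \<Longrightarrow> (\<Sum>j<n. A $$ (i,j) * p j) = p i \<and> (\<Sum>j<n. B $$ (i,j) * q j) = q i"
    by (rule core[where a="\<lambda>i j. A $$ (i,j)" and b="\<lambda>i j. B $$ (i,j)" and d="\<lambda>i. D $$ (i,i)"
        and v="\<lambda>i. v $ i" and p=p and q=q and n=n])
      (use nonnegA nonnegB d0 vpos vA vB vAB' hp hq y0 in \<open>auto simp: nonneg_mat_def p_def q_def\<close>)
  from xnz xc obtain k where k: "k < n+n" "x $ k \<noteq> 0" by (metis eq_vecI carrier_vecD index_zero_vec)
  hence yk: "y k \<noteq> 0" unfolding y_def by simp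
  show False
  proof (cases "k < n")
    case True
    have "\<not> schur_stable A"
      by (rule fixed_not_stable[OF A, of "vec n p"]) (use True yk fx in \<open>auto simp: p_def\<close>)
    with stabA show False by simp
  next
    case False
    then obtain k' where kk: "k = n + k'" "k' < n" using k by (metis add_less_imp_less_left le_Suc_ex not_less)
    have "\<not> schur_stable B"
      by (rule fixed_not_stable[OF B, of "vec n q"]) (use kk yk fx in \<open>auto simp: q_def\<close>)
    with stabB show False by simp
  qed
qed

end
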